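(* Let $N\in\{2,3\}$. If $z\in C^2(\mathbb{R})$ satisfies $$-z''(t)+(N-4)z'(t)+(2N-4)z(t)=\frac{N-1}{2}\,z(t)^2\qquad (t\in\mathbb{R})$$ and $\lim_{t\to-\infty}e^tz(t)=0=\lim_{t\to+\infty}e^tz(t)$, then $z\equiv0$. *)

theory Defs
  imports "HOL-Analysis.Analysis"
begin

end

theory Submission
  imports Defs
begin

lemma exp2: "exp (2*t) = exp t * exp (t::real)"
  by (simp add: exp_add[symmetric])

lemma exp3: "exp (3*t) = exp t * exp t * exp (t::real)"
  by (simp add: exp_add[symmetric])

lemma expm: "exp (-t) * exp t = (1::real)"
  by (simp add: exp_minus_inverse mult.commute)

lemma mono_lim_bot0:
  fixes h :: "real \<Rightarrow> real"
  assumes "(h \<longlongrightarrow> 0) at_bot" and "\<And>s. s \<le> t \<Longrightarrow> h s \<le> h t"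
  shows "0 \<le> h t"
proof (rule tendsto_upperbound[OF assms(1)])
  show "\<forall>\<^sub>F s in at_bot. h s \<le> h t" using assms(2) by (intro eventually_at_bot_linorderI)
qed simp

lemma exp_z_bot:
  fixes z :: "real \<Rightarrow> real"
  assumes "((\<lambda>t. exp t * z t) \<longlongrightarrow> 0) at_bot"
  shows "((\<lambda>t. exp (2*t) * z t) \<longlongrightarrow> 0) at_bot"
proof -
  have "((\<lambda>t. exp t * (exp t * z t)) \<longlongrightarrow> 0) at_bot"
    using tendsto_mult[OF exp_at_bot assms] by simp
  moreover have "(\<lambda>t. exp t * (exp t * z t)) = (\<lambda>t. exp (2*t) * z t)"
    by (simp add: exp2 mult.assoc)
  ultimately show ?thesis by simp
qed

lemma top_contra:
  fixes g :: "real \<Rightarrow> real"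
  assumes lim: "(g \<longlongrightarrow> 0) at_top" and d: "\<delta> > 0" and b: "\<And>t. t \<ge> T \<Longrightarrow> g t \<le> B - \<delta> * t"
  shows False
proof -
  have "\<forall>\<^sub>F t in at_top. g t > -1" using order_tendstoD(1)[OF lim, of "-1"] by simp
  then obtain c where c: "\<And>t. t \<ge> c \<Longrightarrow> g t > -1" by (auto simp: eventually_at_top_linorder)
  define t where "t = max (max c T) ((B + 1) / \<delta>)"
  have "g t > -1" using c t_def by simp
  moreover have "g t \<le> B - \<delta> * t" using b t_def by simp
  moreover have "\<delta> * t \<ge> B + 1"
  proof -
    have "t \<ge> (B + 1) / \<delta>" using t_def by simp
    then show ?thesis using d by (simp add: field_simps)
  qed
  ultimately show False by linarith
qed

lemma bot_contra:
  fixes g :: "real \<Rightarrow> real"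
  assumes lim: "(g \<longlongrightarrow> 0) at_bot" and d: "\<delta> > 0" and b: "\<And>t. t \<le> T \<Longrightarrow> g t \<le> B + \<delta> * t"
  shows False
proof -
  have "\<forall>\<^sub>F t in at_bot. g t > -1" using order_tendstoD(1)[OF lim, of "-1"] by simp
  then obtain c where c: "\<And>t. t \<le> c \<Longrightarrow> g t > -1" by (auto simp: eventually_at_bot_linorder)
  define t where "t = min (min c T) (- (B + 1) / \<delta>)"
  have "g t > -1" using c t_def by simp
  moreover have "g t \<le> B + \<delta> * t" using b t_def by simp
  moreover have "\<delta> * t \<le> - (B + 1)"
  proof -
    have "t \<le> - (B + 1) / \<delta>" using t_def by simp
    then show ?thesis using d by (simp add: field_simps)
  qed
  ultimately show False by linarith
qed
lemma case2:
  fixes z z' z'' :: "real \<Rightarrow> real"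
  assumes d1: "\<And>t. (z has_real_derivative z' t) (at t)"
    and d2: "\<And>t. (z' has_real_derivative z'' t) (at t)"
    and ode: "\<And>t. z'' t = -2 * z' t - (z t)^2/2"
    and lm: "((\<lambda>t. exp t * z t) \<longlongrightarrow> 0) at_bot"
    and lp: "((\<lambda>t. exp t * z t) \<longlongrightarrow> 0) at_top"
  shows "z t = 0"
proof -
  define G where "G t = z' t + 2 * z t" for t
  have dG: "(G has_real_derivative - ((z t)^2/2)) (at t)" for t
  proof -
    have "(G has_real_derivative z'' t + 2 * z' t) (at t)"
      unfolding G_def[abs_def] by (auto intro!: derivative_eq_intros d1 d2)
    then show ?thesis using ode[of t] by simp
  qed
  have Gmono: "G b \<le> G a" if "a \<le> b" for a b
  proof (rule DERIV_nonpos_imp_nonincreasing[OF that])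
    fix x show "\<exists>y. (G has_real_derivative y) (at x) \<and> y \<le> 0" using dG[of x] by force
  qed
  have Gnn: "G T \<ge> 0" for T
  proof (rule ccontr)
    assume "\<not> G T \<ge> 0"
    define \<delta> where "\<delta> = - G T"
    have dpos: "\<delta> > 0" using \<open>\<not> G T \<ge> 0\<close> \<delta>_def by simp
    define h where "h t = exp (2*t) * z t + \<delta> * exp (2*t) / 2" for t
    have dh: "(h has_real_derivative exp (2*t) * (G t + \<delta>)) (at t)" for t
    proof -
      have "(h has_real_derivative exp (2*t) * 2 * z t + exp (2*t) * z' t + \<delta> * (exp (2*t) * 2) / 2) (at t)"
        unfolding h_def[abs_def] by (auto intro!: derivative_eq_intros d1)
      then show ?thesis by (rule DERIV_cong) (simp add: G_def field_simps)
    qed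
    have hle: "h t \<le> h T" if "T \<le> t" for t
    proof (rule DERIV_nonpos_imp_nonincreasing[OF that])
      fix x assume "T \<le> x" "x \<le> t"
      then have "G x + \<delta> \<le> 0" using Gmono[of T x] \<delta>_def by simp
      then have "exp (2*x) * (G x + \<delta>) \<le> 0" by (simp add: mult_nonneg_nonpos)
      then show "\<exists>y. (h has_real_derivative y) (at x) \<and> y \<le> 0" using dh by blast
    qed
    show False
    proof (rule top_contra[OF lp, of "\<delta>/2" "max T 0"])
      show "\<delta>/2 > 0" using dpos by simp
    next
      fix t :: real assume tT: "t \<ge> max T 0"
      have "exp (-t) * h t = (exp (-t) * exp t) * (exp t * z t) + \<delta> * (exp (-t) * exp t) * exp t / 2"
        unfolding h_def exp2 by (simp add: algebra_simps)
      then have eq: "exp t * z t = exp (-t) * h t - \<delta> * exp t / 2" by (simp add: expm)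
      have "exp (-t) * h t \<le> exp (-t) * h T" using hle tT by (simp add: mult_left_mono)
      also have "\<dots> \<le> \<bar>h T\<bar>"
      proof -
        have "exp (-t) \<le> 1" using tT by simp
        then show ?thesis by (metis abs_ge_self abs_mult abs_of_pos exp_gt_zero mult_left_le_one_le abs_ge_zero order.trans)
      qed
      finally have 1: "exp (-t) * h t \<le> \<bar>h T\<bar>" .
      have "\<delta> * (1 + t) \<le> \<delta> * exp t" using dpos exp_ge_add_one_self[of t] by (simp add: mult_left_mono)
      then show "exp t * z t \<le> (\<bar>h T\<bar> - \<delta>/2) - \<delta>/2 * t" using eq 1 by (simp add: algebra_simps)
    qed
  qed
  have Gle: "G t0 \<le> 0" for t0
  proof (rule ccontr)
    assume "\<not> G t0 \<le> 0"
    define \<delta> where "\<delta> = G t0"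
    have dpos: "\<delta> > 0" using \<open>\<not> G t0 \<le> 0\<close> \<delta>_def by simp
    have e2: "((\<lambda>x::real. exp (2 * x)) \<longlongrightarrow> 0) at_bot"
      using exp_z_bot[of "\<lambda>_. 1"] exp_at_bot by simp
    have zlow: "z t \<ge> G t / 2" for t
    proof -
      define h where "h s = exp (2* s) * z s - G t * exp (2* s) / 2" for s
      have dh: "(h has_real_derivative exp (2* s) * (G s - G t)) (at s)" for s
      proof -
        have "(h has_real_derivative exp (2* s) * 2 * z s + exp (2* s) * z' s - G t * (exp (2* s) * 2) / 2) (at s)"
          unfolding h_def[abs_def] by (auto intro!: derivative_eq_intros d1)
        then show ?thesis by (rule DERIV_cong) (simp add: G_def field_simps)
      qed
      have "0 \<le> h t"
      proof (rule mono_lim_bot0[of h t])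
        have "((\<lambda>s. exp (2* s) * z s - G t * exp (2* s) / 2) \<longlongrightarrow> 0 - G t * 0 / 2) at_bot"
          by (rule tendsto_diff[OF exp_z_bot[OF lm] tendsto_divide[OF tendsto_mult[OF tendsto_const e2] tendsto_const]]) simp
        then show "(h \<longlongrightarrow> 0) at_bot" by (simp add: h_def[abs_def])
      next
        fix s assume "s \<le> t"
        show "h s \<le> h t"
        proof (rule DERIV_nonneg_imp_nondecreasing[OF \<open>s \<le> t\<close>])
          fix x assume "s \<le> x" "x \<le> t"
          then have "G x - G t \<ge> 0" using Gmono[of x t] by simp
          then have "exp (2*x) * (G x - G t) \<ge> 0" by simp
          then show "\<exists>y. (h has_real_derivative y) (at x) \<and> y \<ge> 0" using dh by blast
        qed
      qed
      then show ?thesis by (simp add: h_def algebra_simps)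
    qed
    define k where "k t = 1 / G t - t / 8" for t
    have Gpos: "G t \<ge> \<delta>" if "t \<le> t0" for t using Gmono[OF that] \<delta>_def by simp
    have kle: "k t \<le> k t0" if "t \<le> t0" for t
    proof (rule DERIV_nonneg_imp_nondecreasing[OF that])
      fix x assume x: "t \<le> x" "x \<le> t0"
      have Gx: "G x > 0" using Gpos[of x] x dpos by simp
      have "(k has_real_derivative (((z x)^2/2) / (G x)^2 - 1/8)) (at x)"
        unfolding k_def[abs_def] using Gx by (auto intro!: derivative_eq_intros dG simp: power2_eq_square)
      moreover have "((z x)^2/2) / (G x)^2 - 1/8 \<ge> 0"
      proof -
        have "z x \<ge> G x / 2" by (rule zlow)
        then have "(z x)^2 \<ge> (G x / 2)^2" using Gx by (intro power_mono) auto
        then show ?thesis using Gx by (simp add: field_simps power2_eq_square)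
      qed
      ultimately show "\<exists>y. (k has_real_derivative y) (at x) \<and> y \<ge> 0" by blast
    qed
    define t where "t = t0 - 8 / \<delta> - 8"
    have "8 / \<delta> > 0" using dpos by simp
    then have tt: "t \<le> t0" using t_def by linarith
    have "1 / G t \<le> 1 / \<delta> - (t0 - t) / 8" using kle[OF tt] \<delta>_def unfolding k_def by (simp add: field_simps)
    also have "\<dots> = -1" using t_def dpos by (simp add: field_simps)
    finally have "1 / G t \<le> -1" .
    moreover have "G t > 0" using Gpos[OF tt] dpos by simp
    moreover have "1 / G t > 0" using \<open>G t > 0\<close> by simp
    ultimately show False by linarith
  qed
  have G0: "G = (\<lambda>t. 0)" using Gle Gnn by (auto intro: antisym)
  have "(G has_real_derivative 0) (at t)" by (simp add: G0)
  then have "- ((z t)^2/2) = 0" using DERIV_unique dG by blast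
  then show ?thesis by simp
qed

lemma alg3:
  fixes a b e :: real
  assumes a: "a > 0" and E: "b^2/2 - a^2 + a^3/3 \<ge> e"
  shows "2 - a - (b/a)^2 \<le> - (a/3) - 2*e/a^2"
proof -
  have "b^2 \<ge> 2*e + 2*a^2 - 2*a^3/3" using E by simp
  then have "b^2/a^2 \<ge> (2*e + 2*a^2 - 2*a^3/3)/a^2" using a by (simp add: divide_right_mono)
  moreover have "(2*e + 2*a^2 - 2*a^3/3)/a^2 = 2*e/a^2 + 2 - 2*a/3" using a
    by (simp add: field_simps power2_eq_square power3_eq_cube)
  ultimately show ?thesis by (simp add: power_divide)
qed

lemma alg3m:
  fixes a e :: real
  assumes a: "a > 0" and e: "e > 0"
  shows "- (a/3) - 2*e/a^2 \<le> - min 1 (2*e/9)"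
proof (cases "a \<ge> 3")
  case True
  have "2*e/a^2 \<ge> 0" using e by simp
  then show ?thesis using True by linarith
next
  case False
  then have "a*a \<le> 3*3" using a by (intro mult_mono) auto
  then have "a^2 \<le> 9" by (simp add: power2_eq_square)
  then have "2*e/a^2 \<ge> 2*e/9" using a e by (intro divide_left_mono) auto
  moreover have "a/3 \<ge> 0" using a by simp
  ultimately show ?thesis by linarith
qed

lemma expsum: "a + b = c \<Longrightarrow> exp a * exp b = exp (c::real)"
  by (simp add: exp_add[symmetric])

lemma case3:
  fixes z z' z'' :: "real \<Rightarrow> real"
  assumes d1: "\<And>t. (z has_real_derivative z' t) (at t)"
    and d2: "\<And>t. (z' has_real_derivative z'' t) (at t)"
    and ode: "\<And>t. z'' t = - z' t + 2 * z t - (z t)^2"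
    and lm: "((\<lambda>t. exp t * z t) \<longlongrightarrow> 0) at_bot"
    and lp: "((\<lambda>t. exp t * z t) \<longlongrightarrow> 0) at_top"
  shows "z t1 = 0"
proof -
  have em: "exp (-t) = exp ((-1) * t)" for t :: real by simp
  define G where "G t = exp (-t) * (z' t + 2 * z t)" for t
  have dG: "(G has_real_derivative - (exp (-t) * (z t)^2)) (at t)" for t
  proof -
    have "(G has_real_derivative - exp (-t) * (z' t + 2 * z t) + exp (-t) * (z'' t + 2 * z' t)) (at t)"
      unfolding G_def[abs_def] by (auto intro!: derivative_eq_intros d1 d2)
    then show ?thesis by (rule DERIV_cong) (simp add: ode algebra_simps)
  qed
  have Gmono: "G b \<le> G a" if "a \<le> b" for a b
  proof (rule DERIV_nonpos_imp_nonincreasing[OF that])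
    fix x show "\<exists>y. (G has_real_derivative y) (at x) \<and> y \<le> 0" using dG[of x] by force
  qed
  define F where "F t = exp (2*t) * (z' t - z t)" for t
  have dF: "(F has_real_derivative - (exp (2*t) * (z t)^2)) (at t)" for t
  proof -
    have "(F has_real_derivative exp (2*t) * 2 * (z' t - z t) + exp (2*t) * (z'' t - z' t)) (at t)"
      unfolding F_def[abs_def] by (auto intro!: derivative_eq_intros d1 d2)
    then show ?thesis by (rule DERIV_cong) (simp add: ode algebra_simps)
  qed
  have Fmono: "F b \<le> F a" if "a \<le> b" for a b
  proof (rule DERIV_nonpos_imp_nonincreasing[OF that])
    fix x show "\<exists>y. (F has_real_derivative y) (at x) \<and> y \<le> 0" using dF[of x] by force
  qed
  have Gnn: "G T \<ge> 0" for T
  proof (rule ccontr)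
    assume "\<not> G T \<ge> 0"
    define \<delta> where "\<delta> = - G T"
    have dpos: "\<delta> > 0" using \<open>\<not> G T \<ge> 0\<close> \<delta>_def by simp
    define h where "h t = exp (2*t) * z t + \<delta> * exp (3*t) / 3" for t
    have dh: "(h has_real_derivative exp (3*t) * (G t + \<delta>)) (at t)" for t
    proof -
      have "(h has_real_derivative exp (2*t) * 2 * z t + exp (2*t) * z' t + \<delta> * (exp (3*t) * 3) / 3) (at t)"
        unfolding h_def[abs_def] by (auto intro!: derivative_eq_intros d1)
      moreover have "exp (3*t) * (G t + \<delta>) = (exp (3*t) * exp (-t)) * (z' t + 2 * z t) + \<delta> * exp (3*t)"
        unfolding G_def by (simp add: algebra_simps)
      moreover have "exp (3*t) * exp (-t) = exp (2*t)" by (rule expsum) simp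
      ultimately show ?thesis by (simp add: algebra_simps)
    qed
    have hle: "h t \<le> h T" if "T \<le> t" for t
    proof (rule DERIV_nonpos_imp_nonincreasing[OF that])
      fix x assume "T \<le> x" "x \<le> t"
      then have "G x + \<delta> \<le> 0" using Gmono[of T x] \<delta>_def by simp
      then have "exp (3*x) * (G x + \<delta>) \<le> 0" by (simp add: mult_nonneg_nonpos)
      then show "\<exists>y. (h has_real_derivative y) (at x) \<and> y \<le> 0" using dh by blast
    qed
    show False
    proof (rule top_contra[OF lp, of "\<delta>/3" "max T 0"])
      show "\<delta>/3 > 0" using dpos by simp
    next
      fix t :: real assume tT: "t \<ge> max T 0"
      have "exp (-t) * h t = (exp (-t) * exp (2*t)) * z t + \<delta> * (exp (-t) * exp (3*t)) / 3"
        unfolding h_def by (simp add: algebra_simps)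
      also have "\<dots> = exp t * z t + \<delta> * exp (2*t) / 3"
        using expsum[of "-t" "2*t" t] expsum[of "-t" "3*t" "2*t"] by simp
      finally have eq: "exp t * z t = exp (-t) * h t - \<delta> * exp (2*t) / 3" by simp
      have "exp (-t) * h t \<le> exp (-t) * h T" using hle tT by (simp add: mult_left_mono)
      also have "\<dots> \<le> \<bar>h T\<bar>"
      proof -
        have "exp (-t) \<le> 1" using tT by simp
        then show ?thesis by (metis abs_ge_self abs_mult abs_of_pos exp_gt_zero mult_left_le_one_le abs_ge_zero order.trans)
      qed
      finally have 1: "exp (-t) * h t \<le> \<bar>h T\<bar>" .
      have "1 + t \<le> exp (2*t)" using exp_ge_add_one_self[of t] tT by (smt (verit) exp_le_cancel_iff)
      then have "\<delta> * (1 + t) \<le> \<delta> * exp (2*t)" using dpos by (simp add: mult_left_mono)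
      then show "exp t * z t \<le> (\<bar>h T\<bar> - \<delta>/3) - \<delta>/3 * t" using eq 1 by (simp add: algebra_simps)
    qed
  qed
  have Fnp: "F T \<le> 0" for T
  proof (rule ccontr)
    assume "\<not> F T \<le> 0"
    define \<delta> where "\<delta> = F T"
    have dpos: "\<delta> > 0" using \<open>\<not> F T \<le> 0\<close> \<delta>_def by simp
    define h where "h t = exp (-t) * z t + \<delta> * exp (-3*t) / 3" for t
    have dh: "(h has_real_derivative exp (-3*t) * (F t - \<delta>)) (at t)" for t
    proof -
      have D1: "(h has_real_derivative - exp (-t) * z t + exp (-t) * z' t + \<delta> * (exp (-3*t) * (-3)) / 3) (at t)"
        unfolding h_def[abs_def] by (auto intro!: derivative_eq_intros d1)
      have "exp (-3*t) * (F t - \<delta>) = (exp (-3*t) * exp (2*t)) * (z' t - z t) - \<delta> * exp (-3*t)"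
        unfolding F_def by (simp add: algebra_simps)
      also have "exp (-3*t) * exp (2*t) = exp (-t)" by (rule expsum) simp
      finally have eq: "exp (-3*t) * (F t - \<delta>) = exp (-t) * (z' t - z t) - \<delta> * exp (-3*t)" .
      show ?thesis unfolding eq by (rule DERIV_cong[OF D1]) (simp add: algebra_simps)
    qed
    have hle: "h t \<le> h T" if "t \<le> T" for t
    proof (rule DERIV_nonneg_imp_nondecreasing[OF that])
      fix x assume "t \<le> x" "x \<le> T"
      then have "F x - \<delta> \<ge> 0" using Fmono[of x T] \<delta>_def by simp
      then have "exp (-3*x) * (F x - \<delta>) \<ge> 0" by simp
      then show "\<exists>y. (h has_real_derivative y) (at x) \<and> y \<ge> 0" using dh by blast
    qed
    show False
    proof (rule bot_contra[OF lm, of "\<delta>/3" "min T 0"])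
      show "\<delta>/3 > 0" using dpos by simp
    next
      fix t :: real assume tT: "t \<le> min T 0"
      have "exp (2*t) * h t = (exp (2*t) * exp (-t)) * z t + \<delta> * (exp (2*t) * exp (-3*t)) / 3"
        unfolding h_def by (simp add: algebra_simps)
      also have "\<dots> = exp t * z t + \<delta> * exp (-t) / 3"
        using expsum[of "2*t" "-t" t] expsum[of "2*t" "-3*t" "-t"] by simp
      finally have eq: "exp t * z t = exp (2*t) * h t - \<delta> * exp (-t) / 3" by simp
      have "exp (2*t) * h t \<le> exp (2*t) * h T" using hle tT by (simp add: mult_left_mono)
      also have "\<dots> \<le> \<bar>h T\<bar>"
      proof -
        have "exp (2*t) \<le> 1" using tT by simp
        then show ?thesis by (metis abs_ge_self abs_mult abs_of_pos exp_gt_zero mult_left_le_one_le abs_ge_zero order.trans)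
      qed
      finally have 1: "exp (2*t) * h t \<le> \<bar>h T\<bar>" .
      have "1 - t \<le> exp (-t)" using exp_ge_add_one_self[of "-t"] by simp
      then have "\<delta> * (1 - t) \<le> \<delta> * exp (-t)" using dpos by (simp add: mult_left_mono)
      then show "exp t * z t \<le> (\<bar>h T\<bar> - \<delta>/3) + \<delta>/3 * t" using eq 1 by (simp add: algebra_simps)
    qed
  qed
  have zup: "z' t \<le> z t" for t using Fnp[of t] by (simp add: F_def mult_le_0_iff)
  have zlo: "- 2 * z t \<le> z' t" for t using Gnn[of t] by (simp add: G_def zero_le_mult_iff)
  have znn: "z t \<ge> 0" for t using zup[of t] zlo[of t] by simp
  have zsq: "(z' t)^2 \<le> 4 * (z t)^2" for t
  proof -
    have "\<bar>z' t\<bar> \<le> 2 * z t" using zup[of t] zlo[of t] znn[of t] by simp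
    then have "\<bar>z' t\<bar>^2 \<le> (2 * z t)^2" by (intro power_mono) auto
    then show ?thesis by (simp add: power_mult_distrib)
  qed
  define E where "E t = (z' t)^2/2 - (z t)^2 + (z t)^3/3" for t
  have dE: "(E has_real_derivative - ((z' t)^2)) (at t)" for t
  proof -
    have "(E has_real_derivative (2 * z' t * z'' t)/2 - 2 * z t * z' t + (3 * (z t)^2 * z' t)/3) (at t)"
      unfolding E_def[abs_def] by (auto intro!: derivative_eq_intros d1 d2 simp: power2_eq_square)
    then show ?thesis by (rule DERIV_cong) (simp add: ode field_simps power2_eq_square)
  qed
  have Emono: "E b \<le> E a" if "a \<le> b" for a b
  proof (rule DERIV_nonpos_imp_nonincreasing[OF that])
    fix x show "\<exists>y. (E has_real_derivative y) (at x) \<and> y \<le> 0" using dE[of x] by force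
  qed
  have ztop: "(z \<longlongrightarrow> 0) at_top"
  proof -
    have e: "((\<lambda>t. exp (- t)) \<longlongrightarrow> (0::real)) at_top"
      using filterlim_compose[OF exp_at_bot filterlim_uminus_at_bot_at_top] by simp
    have "((\<lambda>t. exp (-t) * (exp t * z t)) \<longlongrightarrow> 0 * 0) at_top"
      by (rule tendsto_mult[OF e lp])
    moreover have "(\<lambda>t. exp (-t) * (exp t * z t)) = z"
    proof
      fix t show "exp (-t) * (exp t * z t) = z t" using expm[of t] by (simp add: mult.assoc[symmetric])
    qed
    ultimately show ?thesis by simp
  qed
  have z'top: "(z' \<longlongrightarrow> 0) at_top"
  proof (rule tendsto_sandwich[of "\<lambda>t. - 2 * z t" z' _ z])
    show "\<forall>\<^sub>F n in at_top. - 2 * z n \<le> z' n" using zlo by simp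
    show "\<forall>\<^sub>F n in at_top. z' n \<le> z n" using zup by simp
    show "((\<lambda>t. - 2 * z t) \<longlongrightarrow> 0) at_top" using tendsto_mult[OF tendsto_const ztop, of "-2"] by simp
    show "(z \<longlongrightarrow> 0) at_top" by (rule ztop)
  qed
  have Etop: "(E \<longlongrightarrow> 0) at_top"
  proof -
    have "((\<lambda>t. (z' t)^2/2 - (z t)^2 + (z t)^3/3) \<longlongrightarrow> 0^2/2 - 0^2 + 0^3/3) at_top"
      by (intro tendsto_diff tendsto_add tendsto_divide tendsto_power z'top ztop tendsto_const) auto
    then show ?thesis by (simp add: E_def[abs_def])
  qed
  have Enn: "E t \<ge> 0" for t
  proof (rule tendsto_upperbound[OF Etop])
    show "\<forall>\<^sub>F s in at_top. E s \<le> E t" using Emono by (intro eventually_at_top_linorderI)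
  qed simp
  show ?thesis
  proof (rule ccontr)
    assume nz: "z t1 \<noteq> 0"
    have "\<exists>t0. E t0 > 0"
    proof (rule ccontr)
      assume "\<not> (\<exists>t0. E t0 > 0)"
      then have "E = (\<lambda>_. 0)" using Enn by (auto intro: antisym simp: not_less)
      then have z'0: "z' s = 0" for s
      proof -
        have "(E has_real_derivative 0) (at s)" using \<open>E = (\<lambda>_. 0)\<close> by simp
        then have "- ((z' s)^2) = 0" using DERIV_unique dE by blast
        then show ?thesis by simp
      qed
      have zc: "z s = z t1" for s
        by (rule DERIV_isconst_all) (use d1 z'0 in metis)
      define c where "c = z t1"
      have "z = (\<lambda>_. c)" using zc c_def by auto
      then have "((\<lambda>_::real. c) \<longlongrightarrow> 0) at_top" using ztop by simp
      then have "c = 0" using tendsto_const_iff[OF trivial_limit_at_top_linorder] by blast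
      then have "z t1 = 0" using c_def by simp
      then show False using nz by simp
    qed
    then obtain t0 where t0: "E t0 > 0" by blast
    define \<epsilon> where "\<epsilon> = E t0"
    have epos: "\<epsilon> > 0" using t0 \<epsilon>_def by simp
    have Eeps: "E t \<ge> \<epsilon>" if "t \<le> t0" for t using Emono[OF that] \<epsilon>_def by simp
    have zpos: "z t > 0" if "t \<le> t0" for t
    proof (rule ccontr)
      assume "\<not> z t > 0"
      then have "z t = 0" using znn[of t] by simp
      moreover then have "z' t = 0" using zup[of t] zlo[of t] by simp
      ultimately have "E t = 0" by (simp add: E_def)
      then show False using Eeps[OF that] epos by simp
    qed
    define y where "y t = ln (z t) + z' t / z t" for t
    define D where "D t = 2 - z t - (z' t / z t)^2" for t
    have dy: "(y has_real_derivative D x) (at x)" if "x \<le> t0" for x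
    proof -
      have zx: "z x > 0" using zpos[OF that] .
      have l: "((\<lambda>s. ln (z s)) has_real_derivative 1 / z x * z' x) (at x)"
        by (rule DERIV_chain2[OF DERIV_ln_divide[OF zx] d1])
      have q: "((\<lambda>s. z' s / z s) has_real_derivative (z'' x * z x - z' x * z' x) / (z x * z x)) (at x)"
        by (rule DERIV_divide[OF d2 d1]) (use zx in simp)
      have "(y has_real_derivative 1 / z x * z' x + (z'' x * z x - z' x * z' x) / (z x * z x)) (at x)"
        unfolding y_def[abs_def] by (rule DERIV_add[OF l q])
      then show ?thesis
        by (rule DERIV_cong) (use zx in \<open>simp add: D_def ode field_simps power2_eq_square\<close>)
    qed
    have Dle: "D x \<le> - (z x / 3) - 2 * \<epsilon> / (z x)^2" if "x \<le> t0" for x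
      unfolding D_def by (rule alg3[OF zpos[OF that]]) (use Eeps[OF that] in \<open>simp add: E_def\<close>)
    define m where "m = min 1 (2 * \<epsilon> / 9)"
    have mpos: "m > 0" using epos m_def by simp
    have Dm: "D x \<le> - m" if "x \<le> t0" for x
      using Dle[OF that] alg3m[OF zpos[OF that] epos] m_def by simp
    have wle: "z' t / z t \<le> 1" if "t \<le> t0" for t
      using zup[of t] zpos[OF that] by simp
    have lnz: "ln (z t) \<ge> y t - 1" if "t \<le> t0" for t
      using wle[OF that] y_def by simp
    have st1: "y t \<ge> y t0 + m * (t0 - t)" if "t \<le> t0" for t
    proof -
      have "(\<lambda>s. y s + m * s) t0 \<le> (\<lambda>s. y s + m * s) t"
      proof (rule DERIV_nonpos_imp_nonincreasing[OF that])
        fix x assume x: "t \<le> x" "x \<le> t0"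
        have "((\<lambda>s. y s + m * s) has_real_derivative D x + m * 1) (at x)"
          by (intro DERIV_add dy DERIV_cmult DERIV_ident) (use x in simp)
        moreover have "D x + m * 1 \<le> 0" using Dm[of x] x by simp
        ultimately show "\<exists>d. ((\<lambda>s. y s + m * s) has_real_derivative d) (at x) \<and> d \<le> 0" by blast
      qed
      then show ?thesis by (simp add: algebra_simps)
    qed
    define t2 where "t2 = t0 - (ln 6 + 1 + \<bar>y t0\<bar>) / m"
    have "(ln 6 + 1 + \<bar>y t0\<bar>) / m \<ge> 0" using mpos by simp
    then have t2le: "t2 \<le> t0" using t2_def by linarith
    have z6: "z t \<ge> 6" if "t \<le> t2" for t
    proof -
      have tt0: "t \<le> t0" using that t2le by simp
      have "m * (t0 - t) \<ge> m * (t0 - t2)" using that mpos by (simp add: mult_left_mono)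
      also have "m * (t0 - t2) = ln 6 + 1 + \<bar>y t0\<bar>" using mpos t2_def by (simp add: field_simps)
      finally have "m * (t0 - t) \<ge> ln 6 + 1 + \<bar>y t0\<bar>" .
      then have "ln (z t) \<ge> ln 6" using st1[OF tt0] lnz[OF tt0] by linarith
      then show ?thesis using zpos[OF tt0] by simp
    qed
    have st2: "y t \<ge> y t2 + 2 * (t2 - t)" if "t \<le> t2" for t
    proof -
      have "(\<lambda>s. y s + 2 * s) t2 \<le> (\<lambda>s. y s + 2 * s) t"
      proof (rule DERIV_nonpos_imp_nonincreasing[OF that])
        fix x assume x: "t \<le> x" "x \<le> t2"
        have xt0: "x \<le> t0" using x t2le by simp
        have "((\<lambda>s. y s + 2 * s) has_real_derivative D x + 2 * 1) (at x)"
          by (intro DERIV_add dy DERIV_cmult DERIV_ident) (use xt0 in simp)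
        moreover have "D x + 2 * 1 \<le> 0"
        proof -
          have "2 * \<epsilon> / (z x)^2 \<ge> 0" using epos by simp
          then show ?thesis using Dle[OF xt0] z6[of x] x by simp
        qed
        ultimately show "\<exists>d. ((\<lambda>s. y s + 2 * s) has_real_derivative d) (at x) \<and> d \<le> 0" by blast
      qed
      then show ?thesis by (simp add: algebra_simps)
    qed
    define C where "C = y t2 + 2 * t2 - 1"
    show False
    proof (rule bot_contra[of "\<lambda>t. - (exp t * z t)" 1 t2 "- 1 - C"])
      show "((\<lambda>t. - (exp t * z t)) \<longlongrightarrow> 0) at_bot" using tendsto_minus[OF lm] by simp
      show "(1::real) > 0" by simp
    next
      fix t :: real assume tt: "t \<le> t2"
      have tt0: "t \<le> t0" using tt t2le by simp
      have "ln (z t) \<ge> C - 2 * t" using st2[OF tt] lnz[OF tt0] C_def by simp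
      then have "t + ln (z t) \<ge> C - t" by simp
      then have "exp (t + ln (z t)) \<ge> exp (C - t)" by simp
      moreover have "exp (t + ln (z t)) = exp t * z t" using zpos[OF tt0] by (simp add: exp_add)
      moreover have "exp (C - t) \<ge> 1 + (C - t)" by (rule exp_ge_add_one_self)
      ultimately show "- (exp t * z t) \<le> - 1 - C + 1 * t" by linarith
    qed
  qed
qed

theorem theorem3p7:
  fixes N :: nat and z z' z'' :: "real \<Rightarrow> real"
  assumes N: "N \<in> {2, 3}"
    and d1: "\<And>t. (z has_real_derivative z' t) (at t)"
    and d2: "\<And>t. (z' has_real_derivative z'' t) (at t)"
    and c2: "continuous_on UNIV z''"
    and ode: "\<And>t. - z'' t + (real N - 4) * z' t + (2 * real N - 4) * z t
                 = (real N - 1) / 2 * (z t)\<^sup>2"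
    and lim_minus: "((\<lambda>t. exp t * z t) \<longlongrightarrow> 0) at_bot"
    and lim_plus: "((\<lambda>t. exp t * z t) \<longlongrightarrow> 0) at_top"
  shows "\<forall>t. z t = 0"
proof
  fix t
  from N have "N = 2 \<or> N = 3" by auto
  then show "z t = 0"
  proof
    assume N2: "N = 2"
    have ode2: "z'' s = -2 * z' s - (z s)^2/2" for s
      using ode[of s] N2 by (simp add: algebra_simps)
    show ?thesis by (rule case2[OF d1 d2 ode2 lim_minus lim_plus])
  next
    assume N3: "N = 3"
    have ode3: "z'' s = - z' s + 2 * z s - (z s)^2" for s
      using ode[of s] N3 by (simp add: algebra_simps)
    show ?thesis by (rule case3[OF d1 d2 ode3 lim_minus lim_plus])
  qed
qed

end
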